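(* Let $L$ be an even hyperbolic lattice with fixed positive cone $\mathcal{P}_L$, let $G$ be a subgroup of $\mathrm{O}^+(L)$ of finite index, and let $\mathcal{V}\subset\mathcal{N}_L\cap L^\vee$ satisfy (V1)–(V4) below. Let $f\in\overline{\mathcal{P}}_L\cap L$ be non-zero with $f^2=0$ and let $b=\mathbb{R}_{>0}f$ be the corresponding rational boundary point. Then there exists $\alpha_0>0$ such that for every $0<\alpha\le\alpha_0$ the closed horoball $\mathrm{HB}=\mathrm{HB}_b(\alpha)$ satisfies: (1) for $v\in\mathcal{V}$, the hyperplane $\pi_L((v)^\perp)$ of $\mathcal{H}_L$ intersects $\mathrm{HB}$ if and only if $\langle v,f\rangle=0$ (i.e. $\pi_L((v)^\perp)$ passes through $b$ at infinity); (2) for every $\mathcal{V}^*$-chamber $D$: if $f$ does not lie in the closure $\overline{D}$ of $D$ in $L\otimes\mathbb{R}$, then $\pi_L(D)\cap\mathrm{HB}=\emptyset$, whereas if $f\in\overline{D}$ then $\pi_L(D)\cap\mathrm{HB}=\rho_b^{-1}(\pi_L(D)\cap\partial\mathrm{HB})$. (V1) There is $c>0$ with $-v^2<c$ for all $v\in\mathcal{V}$. (V2) $\mathcal{V}$ is $G$-invariant. (V3) Every $\mathcal{V}^*$-chamber has a finite defining set. (V4) For every $\mathcal{V}^*$-chamber $D$, every non-zero $x\in\overline{D}$ with $x^2=0$ is a positive real multiple of a vector of $L$.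
   Context: $L$ is an even hyperbolic lattice (free $\mathbb{Z}$-module of rank $n>1$ with non-degenerate even symmetric bilinear form $\langle\ ,\ \rangle$ of signature $(1,n-1)$, extended to $L\otimes\mathbb{R}$); $L^\vee$ its dual lattice; $\mathcal{P}_L$ a connected component of $\{x:x^2>0\}$, $\overline{\mathcal{P}}_L$ its closure; $\mathrm{O}^+(L)$ the isometries preserving $\mathcal{P}_L$. $\mathcal{N}_L=\{v: v^2<0\}$, $(v)^\perp=\{x\in\mathcal{P}_L:\langle x,v\rangle=0\}$, $\Sigma_L(\Delta)=\{x:\langle x,v\rangle\ge0\ \forall v\in\Delta\}$. A $\mathcal{V}^*$-chamber is the closure in $\mathcal{P}_L$ of a connected component of $\mathcal{P}_L\setminus\bigcup_{v\in\mathcal{V}}(v)^\perp$; a defining set of such $D$ is $\Delta\subset\mathcal{N}_L\cap L^\vee$ with $D=\Sigma_L(\Delta)\cap\mathcal{P}_L$. $\mathcal{H}_L=\mathcal{P}_L/\mathbb{R}_{>0}$ is the hyperbolic space with projection $\pi_L:\mathcal{P}_L\to\mathcal{H}_L$. For $\alpha>0$ the closed horoball with base $b$ is $\mathrm{HB}_b(\alpha)=\pi_L(\{x\in\mathcal{P}_L:\langle x,f\rangle^2/x^2\le\alpha\})$, with boundary horosphere $\partial\mathrm{HB}_b(\alpha)=\pi_L(\{x\in\mathcal{P}_L:\langle x,f\rangle^2/x^2=\alpha\})$. The natural projection $\rho_b:\mathrm{HB}_b(\alpha)\to\partial\mathrm{HB}_b(\alpha)$ sends a point $p$ to the unique point of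 $\partial\mathrm{HB}_b(\alpha)$ on the geodesic line of $\mathcal{H}_L$ through $p$ that passes through $b$ at infinity (the image under $\pi_L$ of $\mathcal{P}_L\cap(\mathbb{R}x+\mathbb{R}f)$ for $x$ a representative of $p$). *)

theory Defs
  imports "HOL-Analysis.Analysis"
begin

text \<open>The lattice L is modelled as Z^n inside L (x) R = real^'n, with Gram matrix Q
  (integer entries).  bil Q is the bilinear form extended to real^'n.\<close>

definition bil :: "int^'n^'n \<Rightarrow> real^'n \<Rightarrow> real^'n \<Rightarrow> real" where
  "bil Q x y = (\<Sum>i\<in>UNIV. \<Sum>j\<in>UNIV. x$i * of_int (Q$i$j) * y$j)"

definition latL :: "(real^'n) set" where
  "latL = {x. \<forall>i. x$i \<in> \<int>}"

definition dualL :: "int^'n^'n \<Rightarrow> (real^'n) set" where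
  "dualL Q = {x. \<forall>y\<in>latL. bil Q x y \<in> \<int>}"

definition even_hyperbolic :: "int^'n^'n \<Rightarrow> bool" where
  "even_hyperbolic Q \<longleftrightarrow>
     CARD('n) > 1 \<and>
     transpose Q = Q \<and>
     (\<forall>x\<in>latL. \<exists>k::int. bil Q x x = 2 * of_int k) \<and>
     (\<forall>x. (\<forall>y. bil Q x y = 0) \<longrightarrow> x = 0) \<and>
     \<comment> \<open>signature (1, n-1): there is a positive vector, and the orthogonal
        complement of any positive vector is negative definite\<close>
     (\<exists>x. bil Q x x > 0) \<and>
     (\<forall>x y. bil Q x x > 0 \<longrightarrow> bil Q x y = 0 \<longrightarrow> y \<noteq> 0 \<longrightarrow> bil Q y y < 0)"

definition posCone :: "int^'n^'n \<Rightarrow> real^'n \<Rightarrow> (real^'n) set" where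
  "posCone Q h = connected_component_set {x. bil Q x x > 0} h"

definition Oplus :: "int^'n^'n \<Rightarrow> (real^'n) set \<Rightarrow> (real^'n \<Rightarrow> real^'n) set" where
  "Oplus Q P = {g. linear g \<and> g ` latL = latL \<and>
                   (\<forall>x y. bil Q (g x) (g y) = bil Q x y) \<and> g ` P = P}"

definition finite_index_subgroup ::
  "(real^'n \<Rightarrow> real^'n) set \<Rightarrow> (real^'n \<Rightarrow> real^'n) set \<Rightarrow> bool" where
  "finite_index_subgroup G Og \<longleftrightarrow>
     G \<subseteq> Og \<and> id \<in> G \<and> (\<forall>g\<in>G. \<forall>k\<in>G. g \<circ> k \<in> G) \<and>
     (\<forall>g\<in>G. bij g \<and> inv g \<in> G) \<and>
     (\<exists>F. finite F \<and> F \<subseteq> Og \<and> Og = (\<Union>a\<in>F. (\<lambda>g. a \<circ> g) ` G))"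

definition negL :: "int^'n^'n \<Rightarrow> (real^'n) set" where
  "negL Q = {v. bil Q v v < 0}"

definition perp :: "int^'n^'n \<Rightarrow> (real^'n) set \<Rightarrow> real^'n \<Rightarrow> (real^'n) set" where
  "perp Q P v = {x\<in>P. bil Q x v = 0}"

definition SigmaL :: "int^'n^'n \<Rightarrow> (real^'n) set \<Rightarrow> (real^'n) set" where
  "SigmaL Q \<Delta> = {x. \<forall>v\<in>\<Delta>. bil Q x v \<ge> 0}"

definition is_chamber :: "int^'n^'n \<Rightarrow> (real^'n) set \<Rightarrow> (real^'n) set \<Rightarrow> (real^'n) set \<Rightarrow> bool" where
  "is_chamber Q P V D \<longleftrightarrow>
     (let U = P - (\<Union>v\<in>V. perp Q P v) in
      \<exists>x\<in>U. D = P \<inter> closure (connected_component_set U x))"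

definition defining_set :: "int^'n^'n \<Rightarrow> (real^'n) set \<Rightarrow> (real^'n) set \<Rightarrow> (real^'n) set \<Rightarrow> bool" where
  "defining_set Q P D \<Delta> \<longleftrightarrow> \<Delta> \<subseteq> negL Q \<inter> dualL Q \<and> D = SigmaL Q \<Delta> \<inter> P"

text \<open>Hyperbolic space H_L = P / R_{>0}; points are open rays.\<close>
definition projL :: "real^'n \<Rightarrow> (real^'n) set" where
  "projL x = {t *\<^sub>R x | t. t > 0}"

definition horoball :: "int^'n^'n \<Rightarrow> (real^'n) set \<Rightarrow> real^'n \<Rightarrow> real \<Rightarrow> (real^'n) set set" where
  "horoball Q P f \<alpha> = projL ` {x\<in>P. (bil Q x f)\<^sup>2 / bil Q x x \<le> \<alpha>}"

definition horosphere :: "int^'n^'n \<Rightarrow> (real^'n) set \<Rightarrow> real^'n \<Rightarrow> real \<Rightarrow> (real^'n) set set" where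
  "horosphere Q P f \<alpha> = projL ` {x\<in>P. (bil Q x f)\<^sup>2 / bil Q x x = \<alpha>}"

definition geod_to :: "(real^'n) set \<Rightarrow> real^'n \<Rightarrow> (real^'n) set \<Rightarrow> (real^'n) set set" where
  "geod_to P f p = projL ` (P \<inter> span {SOME x. x \<in> p, f})"

definition rho_b :: "int^'n^'n \<Rightarrow> (real^'n) set \<Rightarrow> real^'n \<Rightarrow> real \<Rightarrow> (real^'n) set \<Rightarrow> (real^'n) set" where
  "rho_b Q P f \<alpha> p = (THE q. q \<in> horosphere Q P f \<alpha> \<and> q \<in> geod_to P f p)"

end

theory Submission
  imports Defs
begin
lemma bil_add_left: "bil Q (x + y) z = bil Q x z + bil Q y z"
  by (simp add: bil_def algebra_simps sum.distrib)
lemma bil_add_right: "bil Q z (x + y) = bil Q z x + bil Q z y"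
  by (simp add: bil_def algebra_simps sum.distrib)
lemma bil_diff_left: "bil Q (x - y) z = bil Q x z - bil Q y z"
  by (simp add: bil_def algebra_simps sum_subtractf)
lemma bil_diff_right: "bil Q z (x - y) = bil Q z x - bil Q z y"
  by (simp add: bil_def algebra_simps sum_subtractf)
lemma bil_scale_left: "bil Q (a *\<^sub>R x) z = a * bil Q x z"
  by (simp add: bil_def sum_distrib_left algebra_simps)
lemma bil_scale_right: "bil Q z (a *\<^sub>R x) = a * bil Q z x"
  by (simp add: bil_def sum_distrib_left algebra_simps)
lemma bil_zero_left[simp]: "bil Q 0 z = 0" by (simp add: bil_def)
lemma bil_zero_right[simp]: "bil Q z 0 = 0" by (simp add: bil_def)
lemma bil_sym: assumes "transpose Q = Q" shows "bil Q x y = bil Q y x"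
proof -
  have q: "Q $ j $ i = Q $ i $ j" for i j
  proof -
    have "transpose Q $ i $ j = Q $ i $ j" using assms by simp
    thus ?thesis by (simp add: transpose_def)
  qed
  show ?thesis unfolding bil_def
    by (subst sum.swap) (simp add: q mult.commute mult.left_commute)
qed
lemma bil_cont: "continuous_on S F \<Longrightarrow> continuous_on S G \<Longrightarrow> continuous_on S (\<lambda>x. bil Q (F x) (G x))"
  unfolding bil_def by (intro continuous_intros)

lemmas bil_lin = bil_add_left bil_add_right bil_diff_left bil_diff_right bil_scale_left bil_scale_right

locale hyp =
  fixes Q :: "int^'n^'n" and h f :: "real^'n" and V :: "(real^'n) set" and c :: real
  assumes sym: "transpose Q = Q"
  and sig: "\<And>x y. bil Q x x > 0 \<Longrightarrow> bil Q x y = 0 \<Longrightarrow> y \<noteq> 0 \<Longrightarrow> bil Q y y < 0"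
  and hpos: "bil Q h h > 0"
  and fP: "f \<in> closure (posCone Q h)" and fL: "f \<in> latL" and fnz: "f \<noteq> 0" and ff: "bil Q f f = 0"
  and V: "V \<subseteq> negL Q \<inter> dualL Q"
  and cpos: "c > 0" and Vc: "\<And>v. v\<in>V \<Longrightarrow> - bil Q v v < c"
begin

abbreviation "P \<equiv> posCone Q h"
abbreviation "B \<equiv> bil Q"

lemma symB: "B x y = B y x" using bil_sym[OF sym] .

lemma sigle: "B x x > 0 \<Longrightarrow> B x w = 0 \<Longrightarrow> B w w \<le> 0"
proof (cases "w = 0")
  case True then show ?thesis by simp
next
  case False
  assume "B x x > 0" "B x w = 0"
  with sig[of x w] False show ?thesis by simp
qed

lemma P_pos: "x \<in> P \<Longrightarrow> B x x > 0"
proof -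
  assume "x \<in> P"
  hence "x \<in> {x. B x x > 0}" unfolding posCone_def by (rule subsetD[OF connected_component_subset])
  thus ?thesis by simp
qed

lemma h_in: "h \<in> P" unfolding posCone_def using hpos by (simp add: connected_component_refl)

lemma nzf: "B x x > 0 \<Longrightarrow> B x f \<noteq> 0"
proof
  assume "B x x > 0" "B x f = 0"
  with sig[of x f] fnz have "B f f < 0" by simp
  with ff show False by simp
qed

lemma nzxy: "B x x > 0 \<Longrightarrow> B y y > 0 \<Longrightarrow> B x y \<noteq> 0"
proof
  assume a: "B x x > 0" "B y y > 0" "B x y = 0"
  have "y \<noteq> 0" using a(2) by auto
  with sig[of x y] a have "B y y < 0" by simp
  with a(2) show False by simp
qed

lemma contB: "continuous_on UNIV (\<lambda>y. B x y)"
  by (intro bil_cont continuous_intros)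

lemma F0: assumes "x \<in> P" "y \<in> P" shows "B x y > 0"
proof (rule ccontr)
  assume "\<not> B x y > 0"
  moreover have "B x y \<noteq> 0" using nzxy[OF P_pos[OF assms(1)] P_pos[OF assms(2)]] .
  ultimately have neg: "B x y < 0" by simp
  have conn: "connected ((\<lambda>y. B x y) ` P)"
    by (rule connected_continuous_image[OF continuous_on_subset[OF contB]]) (auto simp: posCone_def)
  have "B x x \<in> (\<lambda>y. B x y) ` P" "B x y \<in> (\<lambda>y. B x y) ` P" using assms by auto
  with conn neg P_pos[OF assms(1)] have "0 \<in> (\<lambda>y. B x y) ` P"
    unfolding connected_iff_interval by (meson less_imp_le)
  then obtain z where "z \<in> P" "B x z = 0" by auto
  thus False using nzxy[OF P_pos[OF assms(1)] P_pos[of z]] by blast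
qed

lemma F1: assumes "x \<in> P" shows "B x f > 0"
proof -
  have cl: "closed {y. 0 \<le> B x y}" by (rule closed_Collect_le[OF continuous_on_const contB])
  have sub: "P \<subseteq> {y. 0 \<le> B x y}" using F0[OF assms] by (auto intro: less_imp_le)
  have "closure P \<subseteq> {y. 0 \<le> B x y}" by (rule closure_minimal[OF sub cl])
  hence "0 \<le> B x f" using fP by auto
  moreover have "B x f \<noteq> 0" using nzf P_pos assms by blast
  ultimately show ?thesis by simp
qed

lemma segP: assumes "p \<in> P" "B q q > 0" "B p q > 0" shows "closed_segment p q \<subseteq> P"
proof -
  have "closed_segment p q \<subseteq> {z. B z z > 0}"
  proof
    fix z assume "z \<in> closed_segment p q"
    then obtain u where u: "0 \<le> u" "u \<le> 1" "z = (1-u) *\<^sub>R p + u *\<^sub>R q"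
      unfolding closed_segment_def by auto
    have e: "B z z = (1-u)^2 * B p p + 2*((1-u)*u) * B p q + u^2 * B q q"
      unfolding u(3) by (simp add: bil_lin symB[of q p] power2_eq_square algebra_simps)
    have pp: "B p p > 0" using P_pos assms by auto
    have "(1-u)^2 * B p p + 2*((1-u)*u) * B p q + u^2 * B q q > 0"
    proof (cases "u < 1")
      case True
      then show ?thesis using u pp assms
        by (intro add_pos_nonneg add_nonneg_nonneg) (auto intro!: mult_nonneg_nonneg)
    next
      case False
      then show ?thesis using u assms by auto
    qed
    with e show "z \<in> {z. B z z > 0}" by simp
  qed
  hence "closed_segment p q \<subseteq> connected_component_set {z. B z z > 0} p"
    by (intro connected_component_maximal) auto
  also have "\<dots> = P" using assms(1) unfolding posCone_def by (rule connected_component_eq)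
  finally show ?thesis .
qed

lemma inP: "p \<in> P \<Longrightarrow> B q q > 0 \<Longrightarrow> B p q > 0 \<Longrightarrow> q \<in> P"
  using segP ends_in_segment by blast

lemma vf_int: assumes "v \<in> V" shows "B v v < 0"
proof -
  have "B v f \<in> \<int>" using assms V fL unfolding dualL_def by auto
  then obtain m :: int where m: "B v f = of_int m" by (auto elim: Ints_cases)
  show "B v v < 0" using assms V unfolding negL_def by auto
qed


lemma vf_sq: assumes "v \<in> V" "B v f \<noteq> 0" shows "(B v f)^2 \<ge> 1"
proof -
  have "B v f \<in> \<int>" using assms V fL unfolding dualL_def by auto
  then obtain m :: int where m: "B v f = of_int m" by (auto elim: Ints_cases)
  with assms have "m \<noteq> 0" by auto
  hence "1 \<le> \<bar>m\<bar>" by simp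
  hence "1 \<le> \<bar>B v f\<bar>" using m by linarith
  hence "1 \<le> \<bar>B v f\<bar>^2" by (rule one_le_power)
  thus ?thesis by simp
qed

lemma lemA: assumes zz: "B z z > 0" and v: "v \<in> V" and vf: "B v f \<noteq> 0" and zv: "B z v = 0"
  shows "B z z < c * (B z f)^2"
proof -
  define k where "k = B z f"
  have k: "k \<noteq> 0" using nzf[OF zz] k_def by simp
  define t where "t = B v f / k^2"
  define w where "w = B z z *\<^sub>R f - k *\<^sub>R z"
  define u where "u = v + t *\<^sub>R w"
  have s1: "B f z = B z f" "B v z = B z v" "B f v = B v f" using symB by auto
  have "B z u = 0" unfolding u_def w_def k_def by (simp add: bil_lin zv algebra_simps)
  hence uu: "B u u \<le> 0" using sigle[OF zz] by blast
  have "B u u = B v v + 2*t*(B z z * B v f) - t^2 * B z z * k^2"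
    unfolding u_def w_def by (simp add: bil_lin s1 zv ff k_def power2_eq_square algebra_simps)
  also have "\<dots> = B v v + (B v f)^2 * B z z / k^2"
    unfolding t_def using k by (simp add: field_simps power2_eq_square)
  finally have "B v v + (B v f)^2 * B z z / k^2 \<le> 0" using uu by simp
  hence "(B v v + (B v f)^2 * B z z / k^2) * k^2 \<le> 0"
    by (simp add: mult_nonpos_nonneg)
  moreover have "(B v v + (B v f)^2 * B z z / k^2) * k^2 = B v v * k^2 + (B v f)^2 * B z z"
    using k by (simp add: field_simps)
  ultimately have e: "B v v * k^2 + (B v f)^2 * B z z \<le> 0" by simp
  have "B z z \<le> (B v f)^2 * B z z" using vf_sq[OF v vf] zz by simp
  also have "\<dots> \<le> - B v v * k^2" using e by simp
  also have "\<dots> < c * k^2" using Vc[OF v] k by (intro mult_strict_right_mono) auto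
  finally show ?thesis unfolding k_def .
qed


lemma pos_xy: assumes "x \<in> P" "a > 0" "B (a *\<^sub>R x + s *\<^sub>R f) (a *\<^sub>R x + s *\<^sub>R f) > 0"
  shows "B x (a *\<^sub>R x + s *\<^sub>R f) > 0"
proof -
  have s1: "B f x = B x f" using symB by auto
  have xx: "B x x > 0" using P_pos assms by auto
  have "B (a *\<^sub>R x + s *\<^sub>R f) (a *\<^sub>R x + s *\<^sub>R f) = a * (a * B x x + 2 * s * B x f)"
    by (simp add: bil_lin s1 ff algebra_simps)
  with assms have "a * B x x + 2 * s * B x f > 0" by (simp add: zero_less_mult_iff)
  moreover have "B x (a *\<^sub>R x + s *\<^sub>R f) = a * B x x + s * B x f" by (simp add: bil_lin)
  moreover have "a * B x x > 0" using xx assms(2) by simp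
  ultimately show ?thesis by linarith
qed

lemma seg_ok:
  fixes x' :: "real^'n"
  assumes x'P: "x' \<in> P" and a: "a > 0" and y': "y' = a *\<^sub>R x' + s *\<^sub>R f"
    and yy: "B y' y' > 0" and sx: "c * (B x' f)^2 < B x' x'" and sy: "c * (B y' f)^2 < B y' y'"
    and wall: "\<And>v. v \<in> V \<Longrightarrow> B v f = 0 \<Longrightarrow> B x' v \<noteq> 0"
    and z: "z \<in> closed_segment x' y'"
  shows "z \<in> P" "\<And>v. v \<in> V \<Longrightarrow> B z v \<noteq> 0"
proof -
  have xy: "B x' y' > 0" using pos_xy[OF x'P a] yy y' by simp
  show zP: "z \<in> P" using segP[OF x'P yy xy] z by blast
  obtain \<tau> where t: "0 \<le> \<tau>" "\<tau> \<le> 1" "z = (1-\<tau>) *\<^sub>R x' + \<tau> *\<^sub>R y'"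
    using z unfolding closed_segment_def by auto
  define m where "m = 1 - \<tau> + \<tau> * a"
  have m: "m > 0"
  proof (cases "\<tau> = 1")
    case True thus ?thesis unfolding m_def using a by simp
  next
    case False
    hence "1 - \<tau> > 0" using t by simp
    moreover have "\<tau> * a \<ge> 0" using t a by simp
    ultimately show ?thesis unfolding m_def by simp
  qed
  have zm: "z = m *\<^sub>R x' + (\<tau> * s) *\<^sub>R f"
    unfolding t(3) y' m_def by (simp add: algebra_simps)
  have s1: "B f x' = B x' f" using symB by auto
  define k where "k = B x' f"
  have zf: "B z f = m * k" unfolding zm k_def by (simp add: bil_lin ff)
  have zz: "B z z = m * (m * B x' x' + 2 * \<tau> * s * k)"
    unfolding zm k_def by (simp add: bil_lin ff s1 algebra_simps)
  have yf: "B y' f = a * k" unfolding y' k_def by (simp add: bil_lin ff)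
  have yyv: "B y' y' = a * (a * B x' x' + 2 * s * k)"
    unfolding y' k_def by (simp add: bil_lin ff s1 algebra_simps)
  have i1: "c * k^2 < B x' x'" using sx k_def by simp
  have "a * (c * a * k^2) < a * (a * B x' x' + 2 * s * k)"
    using sy yf yyv by (simp add: power2_eq_square algebra_simps)
  hence i2: "c * a * k^2 < a * B x' x' + 2 * s * k" using a by simp
  have "c * m * k^2 < m * B x' x' + 2 * \<tau> * s * k"
  proof (cases "\<tau> = 1")
    case True thus ?thesis using i2 unfolding m_def by simp
  next
    case False
    hence "1 - \<tau> > 0" using t by simp
    hence "(1-\<tau>) * (c * k^2) < (1-\<tau>) * B x' x'" using i1 by simp
    moreover have "\<tau> * (c * a * k^2) \<le> \<tau> * (a * B x' x' + 2 * s * k)"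
      using i2 t by (intro mult_left_mono) auto
    ultimately show ?thesis unfolding m_def by (simp add: algebra_simps)
  qed
  hence "m * (c * m * k^2) < m * (m * B x' x' + 2 * \<tau> * s * k)" using m by simp
  hence strict: "c * (B z f)^2 < B z z" unfolding zf zz by (simp add: power2_eq_square algebra_simps)
  fix v assume v: "v \<in> V"
  show "B z v \<noteq> 0"
  proof (cases "B v f = 0")
    case True
    have "B z v = m * B x' v" unfolding zm by (simp add: bil_lin symB[of f v] True)
    thus ?thesis using wall[OF v True] m by simp
  next
    case False
    show ?thesis
    proof
      assume "B z v = 0"
      from lemA[OF P_pos[OF zP] v False this] strict show False by simp
    qed
  qed
qed


lemma contQ: "continuous_on UNIV (\<lambda>x. B (F x) (G x))" if "continuous_on UNIV F" "continuous_on UNIV G"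
  using bil_cont that .

lemma stepD:
  assumes ch: "is_chamber Q P V D" and xD: "x \<in> D" and a: "a > 0"
    and y: "y = a *\<^sub>R x + s *\<^sub>R f" and yy: "B y y > 0"
    and sx: "c * (B x f)^2 < B x x" and sy: "c * (B y f)^2 < B y y"
  shows "y \<in> D"
proof -
  define U where "U = P - (\<Union>v\<in>V. perp Q P v)"
  from ch obtain x1 where x1: "x1 \<in> U" and Ddef: "D = P \<inter> closure (connected_component_set U x1)"
    unfolding is_chamber_def U_def Let_def by blast
  define C where "C = connected_component_set U x1"
  have xP: "x \<in> P" and xC: "x \<in> closure C" using xD Ddef C_def by auto
  define \<phi> where "\<phi> = (\<lambda>x'::real^'n. a *\<^sub>R x' + s *\<^sub>R f)"
  have cphi: "continuous_on UNIV \<phi>" unfolding \<phi>_def by (intro continuous_intros)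
  have key: "\<phi> x' \<in> C" if x'C: "x' \<in> C" and h1: "B (\<phi> x') (\<phi> x') > 0"
     and h2: "c * (B x' f)^2 < B x' x'" and h3: "c * (B (\<phi> x') f)^2 < B (\<phi> x') (\<phi> x')" for x'
  proof -
    have x'U: "x' \<in> U" using x'C C_def connected_component_subset by blast
    hence x'P: "x' \<in> P" unfolding U_def by auto
    have wall: "B x' v \<noteq> 0" if "v \<in> V" "B v f = 0" for v
      using x'U that unfolding U_def perp_def by auto
    have segU: "closed_segment x' (\<phi> x') \<subseteq> U"
    proof
      fix z assume z: "z \<in> closed_segment x' (\<phi> x')"
      note so = seg_ok[OF x'P a \<phi>_def[THEN fun_cong, of x'] h1 h2 h3 wall z]
      show "z \<in> U" unfolding U_def perp_def using so by auto
    qed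
    have "closed_segment x' (\<phi> x') \<subseteq> connected_component_set U x'"
      by (rule connected_component_maximal[OF ends_in_segment(1) connected_segment segU])
    also have "\<dots> = C" unfolding C_def by (rule connected_component_eq) (use x'C C_def in simp)
    finally show ?thesis using ends_in_segment(2) by blast
  qed
  have "y \<in> closure C"
    unfolding closure_approachable
  proof (intro allI impI)
    fix e :: real assume e: "e > 0"
    define Op where "Op = {x'. 0 < B (\<phi> x') (\<phi> x')} \<inter> {x'. c * (B x' f)^2 < B x' x'}
       \<inter> {x'. c * (B (\<phi> x') f)^2 < B (\<phi> x') (\<phi> x')} \<inter> {x'. dist (\<phi> x') y < e}"
    have "open Op" unfolding Op_def
      by (intro open_Int open_Collect_less continuous_intros contQ cphi continuous_on_dist)
    moreover have "x \<in> Op" unfolding Op_def using yy sx sy e y \<phi>_def by auto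
    ultimately have "Op \<inter> closure C \<noteq> {}" using xC by auto
    hence "Op \<inter> C \<noteq> {}" using open_Int_closure_eq_empty[OF \<open>open Op\<close>] by simp
    then obtain x' where x': "x' \<in> Op" "x' \<in> C" by auto
    hence "\<phi> x' \<in> C" using key unfolding Op_def by auto
    moreover have "dist (\<phi> x') y < e" using x' unfolding Op_def by auto
    ultimately show "\<exists>z\<in>C. dist z y < e" by blast
  qed
  moreover have "y \<in> P"
    using inP[OF xP yy] pos_xy[OF xP a] yy y by simp
  ultimately show ?thesis using Ddef C_def by simp
qed


lemma hb_strict: assumes "B x x > 0" "(B x f)^2 \<le> \<alpha> * B x x" "\<alpha> > 0" "\<alpha> \<le> 1/(2*c)"
  shows "c * (B x f)^2 < B x x"
proof -
  have "c * \<alpha> \<le> 1/2" using assms(4) cpos by (simp add: field_simps)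
  have "c * (B x f)^2 \<le> c * (\<alpha> * B x x)" using assms(2) cpos by (simp add: mult_left_mono)
  also have "\<dots> = (c * \<alpha>) * B x x" by simp
  also have "\<dots> \<le> (1/2) * B x x" using \<open>c * \<alpha> \<le> 1/2\<close> assms(1) by (intro mult_right_mono) auto
  also have "\<dots> < B x x" using assms(1) by simp
  finally show ?thesis .
qed

lemma scale_P: "x \<in> P \<Longrightarrow> t > 0 \<Longrightarrow> t *\<^sub>R x \<in> P"
  using inP[of x "t *\<^sub>R x"] P_pos[of x] by (simp add: bil_lin)

end

lemma proj_mem: "x \<in> projL x"
  unfolding projL_def by (rule CollectI, rule exI[of _ 1]) simp

lemma proj_eq: "projL x = projL y \<Longrightarrow> \<exists>t>0. x = t *\<^sub>R y"
  using proj_mem[of x] unfolding projL_def by auto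

lemma proj_scale: assumes "t > 0" shows "projL (t *\<^sub>R x) = projL x"
proof -
  have "{u *\<^sub>R (t *\<^sub>R x) |u. u > 0} = {u *\<^sub>R x |u. u > 0}"
  proof (intro set_eqI iffI)
    fix z assume "z \<in> {u *\<^sub>R (t *\<^sub>R x) |u. u > 0}"
    then obtain u where "u > 0" "z = (u * t) *\<^sub>R x" by auto
    thus "z \<in> {u *\<^sub>R x |u. u > 0}" using assms by (intro CollectI exI[of _ "u*t"]) auto
  next
    fix z assume "z \<in> {u *\<^sub>R x |u. u > 0}"
    then obtain u where "u > 0" "z = (u / t) *\<^sub>R (t *\<^sub>R x)" using assms by auto
    thus "z \<in> {u *\<^sub>R (t *\<^sub>R x) |u. u > 0}" using assms by (intro CollectI exI[of _ "u/t"]) auto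
  qed
  thus ?thesis unfolding projL_def .
qed

lemma span2: "z \<in> span {u, w} \<Longrightarrow> \<exists>a b. z = a *\<^sub>R u + b *\<^sub>R w"
  unfolding span_insert span_singleton by (auto simp: algebra_simps)

lemma span2I: "a *\<^sub>R u + b *\<^sub>R w \<in> span {u, w}"
  by (intro span_add span_scale span_base) auto


context hyp begin

lemma part1: assumes al: "\<alpha> > 0" "\<alpha> \<le> 1/(2*c)" and v: "v \<in> V"
  shows "(projL ` perp Q P v \<inter> horoball Q P f \<alpha> \<noteq> {}) \<longleftrightarrow> B v f = 0"
proof
  assume "projL ` perp Q P v \<inter> horoball Q P f \<alpha> \<noteq> {}"
  then obtain x y where x: "x \<in> P" "B x v = 0" and y: "y \<in> P" "(B y f)^2 / B y y \<le> \<alpha>"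
     and pe: "projL x = projL y"
    unfolding perp_def horoball_def by auto
  obtain t where t: "t > 0" "x = t *\<^sub>R y" using proj_eq[OF pe] by auto
  have yy: "B y y > 0" using P_pos y by auto
  have ry: "(B y f)^2 \<le> \<alpha> * B y y" using y(2) yy by (simp add: pos_divide_le_eq)
  have "(B x f)^2 \<le> \<alpha> * B x x" using ry t unfolding t(2)
    by (simp add: bil_lin power2_eq_square mult_left_mono algebra_simps)
  hence st: "c * (B x f)^2 < B x x" using hb_strict[OF P_pos[OF x(1)] _ al] by simp
  show "B v f = 0"
  proof (rule ccontr)
    assume "B v f \<noteq> 0"
    from lemA[OF P_pos[OF x(1)] v this x(2)] st show False by simp
  qed
next
  assume vf: "B v f = 0"
  have vv: "B v v < 0" using vf_int[OF v] .
  have hh: "B h h > 0" using hpos .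
  define g where "g = (- B v v) *\<^sub>R h + (B h v) *\<^sub>R v"
  have s1: "B v h = B h v" "B f v = B v f" "B f g = B g f" using symB by auto
  have gv: "B g v = 0" unfolding g_def by (simp add: bil_lin)
  have gh: "B g h = - B v v * B h h + (B h v)^2" unfolding g_def
    by (simp add: bil_lin s1 power2_eq_square)
  have gh_pos: "B g h > 0" unfolding gh using vv hh
    by (intro add_pos_nonneg) (auto simp: mult_neg_pos)
  have gg: "B g g = (- B v v) * B g h" unfolding gh unfolding g_def
    by (simp add: bil_lin s1 power2_eq_square algebra_simps)
  have gg_pos: "B g g > 0" unfolding gg using vv gh_pos by (simp add: mult_neg_pos)
  have gP: "g \<in> P" using inP[OF h_in gg_pos] gh_pos symB[of h g] by simp
  define k where "k = B g f"
  have k: "k > 0" unfolding k_def using F1[OF gP] .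
  define x where "x = g + (k / (2*\<alpha>)) *\<^sub>R f"
  have xv: "B x v = 0" unfolding x_def by (simp add: bil_lin gv s1 vf)
  have xf: "B x f = k" unfolding x_def k_def by (simp add: bil_lin ff)
  have xx: "B x x = B g g + k^2 / \<alpha>" unfolding x_def using al(1)
    by (simp add: bil_lin ff s1 k_def[symmetric] power2_eq_square field_simps)
  have xx_pos: "B x x > 0" unfolding xx using gg_pos k al(1) by (simp add: add_pos_nonneg)
  have gx: "B g x > 0" unfolding x_def using gg_pos k al(1)
    by (simp add: bil_lin k_def[symmetric] add_pos_nonneg)
  have xP: "x \<in> P" using inP[OF gP xx_pos gx] .
  have "(B x f)^2 \<le> \<alpha> * B x x" unfolding xf xx using al(1) gg_pos
    by (simp add: field_simps)
  hence "(B x f)^2 / B x x \<le> \<alpha>" using xx_pos by (simp add: pos_divide_le_eq)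
  hence "projL x \<in> horoball Q P f \<alpha>" unfolding horoball_def using xP by auto
  moreover have "projL x \<in> projL ` perp Q P v" unfolding perp_def using xP xv by auto
  ultimately show "projL ` perp Q P v \<inter> horoball Q P f \<alpha> \<noteq> {}" by auto
qed


lemma hb_iff: "x \<in> P \<Longrightarrow> (B x f)^2 / B x x \<le> \<alpha> \<longleftrightarrow> (B x f)^2 \<le> \<alpha> * B x x"
  using P_pos[of x] by (simp add: pos_divide_le_eq)

lemma hs_iff: "x \<in> P \<Longrightarrow> (B x f)^2 / B x x = \<alpha> \<longleftrightarrow> (B x f)^2 = \<alpha> * B x x"
  using P_pos[of x] by (auto simp: field_simps)

lemma ratio_scale: "(B (t *\<^sub>R x) f)^2 = t^2 * (B x f)^2" "B (t *\<^sub>R x) (t *\<^sub>R x) = t^2 * B x x"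
  by (simp_all add: bil_lin power2_eq_square)

lemma rho_val:
  assumes al: "\<alpha> > 0" and yP: "y \<in> P" and ry: "(B y f)^2 \<le> \<alpha> * B y y"
  defines "s \<equiv> ((B y f)^2 / \<alpha> - B y y) / (2 * B y f)"
  shows "y + s *\<^sub>R f \<in> P" "(B (y + s *\<^sub>R f) f)^2 = \<alpha> * B (y + s *\<^sub>R f) (y + s *\<^sub>R f)"
    "rho_b Q P f \<alpha> (projL y) = projL (y + s *\<^sub>R f)"
proof -
  define k where "k = B y f"
  have k: "k > 0" unfolding k_def using F1[OF yP] .
  have yy: "B y y > 0" using P_pos[OF yP] .
  have s1: "B f y = B y f" using symB by auto
  define z where "z = y + s *\<^sub>R f"
  have zf: "B z f = k" unfolding z_def k_def by (simp add: bil_lin ff)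
  have zz: "B z z = k^2 / \<alpha>" unfolding z_def s_def k_def[symmetric] using k al
    by (simp add: bil_lin ff s1 k_def[symmetric] field_simps power2_eq_square)
  have zz_pos: "B z z > 0" unfolding zz using k al by simp
  have yz: "B y z = (B y y + k^2/\<alpha>) / 2" unfolding z_def s_def k_def[symmetric] using k al
    by (simp add: bil_lin k_def[symmetric] field_simps power2_eq_square)
  have yz_pos: "B y z > 0" unfolding yz using yy k al by (simp add: add_pos_nonneg)
  have zP: "z \<in> P" using inP[OF yP zz_pos yz_pos] .
  have zr: "(B z f)^2 = \<alpha> * B z z" unfolding zf zz using al by simp
  show "y + s *\<^sub>R f \<in> P" using zP z_def by simp
  show "(B (y + s *\<^sub>R f) f)^2 = \<alpha> * B (y + s *\<^sub>R f) (y + s *\<^sub>R f)" using zr z_def by simp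
  have zHS: "projL z \<in> horosphere Q P f \<alpha>"
    unfolding horosphere_def using zP zr hs_iff[OF zP] by auto
  define x0 where "x0 = (SOME x. x \<in> projL y)"
  have "x0 \<in> projL y" unfolding x0_def using proj_mem[of y] by (rule someI)
  then obtain t where t: "t > 0" "x0 = t *\<^sub>R y" unfolding projL_def by auto
  have geod: "geod_to P f (projL y) = projL ` (P \<inter> span {x0, f})"
    unfolding geod_to_def x0_def ..
  have zG: "projL z \<in> geod_to P f (projL y)"
  proof -
    have "t *\<^sub>R z = x0 + (t * s) *\<^sub>R f" unfolding z_def t(2) by (simp add: algebra_simps)
    hence "t *\<^sub>R z \<in> span {x0, f}" using span2I[where a=1 and u=x0 and b="t * s" and w=f] by simp
    moreover have "t *\<^sub>R z \<in> P" using scale_P[OF zP t(1)] .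
    ultimately have "t *\<^sub>R z \<in> P \<inter> span {x0, f}" by blast
    moreover have "projL z = projL (t *\<^sub>R z)" using proj_scale[OF t(1), of z] by simp
    ultimately show ?thesis unfolding geod by (rule rev_image_eqI)
  qed
  have uniq: "q = projL z" if q: "q \<in> horosphere Q P f \<alpha>" "q \<in> geod_to P f (projL y)" for q
  proof -
    obtain z1 where z1: "z1 \<in> P" "(B z1 f)^2 / B z1 z1 = \<alpha>" "q = projL z1"
      using q(1) unfolding horosphere_def by auto
    obtain z2 where z2: "z2 \<in> P" "z2 \<in> span {x0, f}" "q = projL z2"
      using q(2) unfolding geod by auto
    obtain t2 where t2: "t2 > 0" "z2 = t2 *\<^sub>R z1" using proj_eq[of z2 z1] z1(3) z2(3) by auto
    have r2: "(B z2 f)^2 = \<alpha> * B z2 z2"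
      using z1(2) hs_iff[OF z1(1)] unfolding t2(2) ratio_scale by simp
    obtain a b where ab: "z2 = a *\<^sub>R x0 + b *\<^sub>R f" using span2[OF z2(2)] by auto
    define A where "A = a * t"
    have z2e: "z2 = A *\<^sub>R y + b *\<^sub>R f" unfolding ab t(2) A_def by simp
    have "B z2 f = A * k" unfolding z2e k_def by (simp add: bil_lin ff)
    hence A: "A > 0" using F1[OF z2(1)] k by (simp add: zero_less_mult_iff)
    have "B z2 z2 = A * (A * B y y + 2 * b * k)" unfolding z2e k_def
      by (simp add: bil_lin ff s1 algebra_simps)
    with r2 \<open>B z2 f = A * k\<close> have "A^2 * k^2 = \<alpha> * (A * (A * B y y + 2 * b * k))"
      by (simp add: power2_eq_square algebra_simps)
    hence "A * (A * k^2) = A * (\<alpha> * (A * B y y + 2 * b * k))" by (simp add: power2_eq_square algebra_simps)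
    hence "A * k^2 = \<alpha> * (A * B y y + 2 * b * k)" using A by simp
    hence e1: "b * (2*\<alpha>*k) = A*(k^2 - \<alpha>*B y y)" by (simp add: algebra_simps)
    have e2: "s * (2*\<alpha>*k) = k^2 - \<alpha> * B y y" unfolding s_def k_def[symmetric] using al k
      by (simp add: divide_simps)
    have "A*(k^2 - \<alpha>*B y y) = A * (s * (2*\<alpha>*k))" by (simp only: e2)
    hence "b * (2*\<alpha>*k) = (A * s) * (2*\<alpha>*k)" using e1 by (simp only: mult.assoc)
    moreover have nz: "2*\<alpha>*k \<noteq> 0" using al k by simp
    ultimately have "b = A * s" using mult_right_cancel[OF nz] by simp
    hence "z2 = A *\<^sub>R z" unfolding z2e z_def by (simp add: algebra_simps)
    thus ?thesis using z2(3) proj_scale[OF A, of z] by simp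
  qed
  show "rho_b Q P f \<alpha> (projL y) = projL (y + s *\<^sub>R f)"
    unfolding rho_b_def z_def[symmetric]
    by (rule the_equality) (use zHS zG in blast, use uniq in blast)
qed


lemma chamber_sub: "is_chamber Q P V D \<Longrightarrow> D \<subseteq> P"
  unfolding is_chamber_def Let_def by auto

lemma part2a: assumes al: "\<alpha> > 0" "\<alpha> \<le> 1/(2*c)" and ch: "is_chamber Q P V D"
  and nf: "f \<notin> closure D"
  shows "projL ` D \<inter> horoball Q P f \<alpha> = {}"
proof (rule ccontr)
  assume "projL ` D \<inter> horoball Q P f \<alpha> \<noteq> {}"
  then obtain d y where d: "d \<in> D" and y: "y \<in> P" "(B y f)^2 / B y y \<le> \<alpha>"
     and pe: "projL d = projL y"
    unfolding horoball_def by auto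
  obtain t where t: "t > 0" "d = t *\<^sub>R y" using proj_eq[OF pe] by auto
  have dP: "d \<in> P" using d chamber_sub[OF ch] by auto
  have ry: "(B y f)^2 \<le> \<alpha> * B y y" using y hb_iff by auto
  have rd: "(B d f)^2 \<le> \<alpha> * B d d" unfolding t(2) ratio_scale using ry t
    by (simp add: mult_left_mono algebra_simps)
  have dd: "B d d > 0" using P_pos[OF dP] .
  define k where "k = B d f"
  have k: "k > 0" unfolding k_def using F1[OF dP] .
  have s1: "B f d = B d f" using symB by auto
  have sd: "c * (B d f)^2 < B d d" using hb_strict[OF dd rd al] .
  have inD: "e *\<^sub>R d + f \<in> D" if e: "e > 0" for e
  proof -
    define q where "q = e *\<^sub>R d + 1 *\<^sub>R f"
    have qf: "B q f = e * k" unfolding q_def k_def by (simp add: bil_lin ff)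
    have qq: "B q q = e * e * B d d + 2 * e * k" unfolding q_def k_def
      by (simp add: bil_lin ff s1 algebra_simps)
    have qq_pos: "B q q > 0" unfolding qq using e dd k by (simp add: add_pos_pos)
    have "(B q f)^2 = e * e * k^2" unfolding qf by (simp add: power2_eq_square)
    also have "\<dots> \<le> e * e * (\<alpha> * B d d)" using rd k_def e by (simp add: mult_left_mono)
    also have "\<dots> \<le> \<alpha> * B q q" unfolding qq using al e k
      by (simp add: algebra_simps)
    finally have "(B q f)^2 \<le> \<alpha> * B q q" .
    hence sq: "c * (B q f)^2 < B q q" using hb_strict[OF qq_pos _ al] by simp
    have "q \<in> D" using stepD[OF ch d e q_def qq_pos sd sq] .
    thus ?thesis unfolding q_def by simp
  qed
  have "f \<in> closure D" unfolding closure_approachable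
  proof (intro allI impI)
    fix r :: real assume r: "r > 0"
    define e where "e = r / (2 * (norm d + 1))"
    have nd: "norm d + 1 > 0" using norm_ge_zero[of d] by linarith
    have e: "e > 0" unfolding e_def using r nd by (intro divide_pos_pos mult_pos_pos) auto
    have "dist (e *\<^sub>R d + f) f = e * norm d" using e by (simp add: dist_norm)
    also have "\<dots> \<le> e * (norm d + 1)" using e by (intro mult_left_mono) auto
    also have "\<dots> = r / 2" unfolding e_def using nd by (simp only: times_divide_eq_left) (simp add: divide_simps)
    also have "\<dots> < r" using r by simp
    finally show "\<exists>z\<in>D. dist z f < r" using inD[OF e] by blast
  qed
  with nf show False by simp
qed

lemma part2b: assumes al: "\<alpha> > 0" "\<alpha> \<le> 1/(2*c)" and ch: "is_chamber Q P V D"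
  shows "projL ` D \<inter> horoball Q P f \<alpha> =
           {p \<in> horoball Q P f \<alpha>. rho_b Q P f \<alpha> p \<in> projL ` D \<inter> horosphere Q P f \<alpha>}"
proof (intro set_eqI iffI)
  fix p assume p: "p \<in> projL ` D \<inter> horoball Q P f \<alpha>"
  then obtain d y where d: "d \<in> D" and y: "y \<in> P" "(B y f)^2 / B y y \<le> \<alpha>"
     and pd: "p = projL d" and py: "p = projL y"
    unfolding horoball_def by auto
  obtain t where t: "t > 0" "d = t *\<^sub>R y" using proj_eq[of d y] pd py by auto
  have dP: "d \<in> P" using d chamber_sub[OF ch] by auto
  have ry: "(B y f)^2 \<le> \<alpha> * B y y" using y hb_iff by auto
  have rd: "(B d f)^2 \<le> \<alpha> * B d d" unfolding t(2) ratio_scale using ry t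
    by (simp add: mult_left_mono algebra_simps)
  note rv = rho_val[OF al(1) y(1) ry]
  define s where "s = ((B y f)^2 / \<alpha> - B y y) / (2 * B y f)"
  define z where "z = y + s *\<^sub>R f"
  have zP: "z \<in> P" and zr: "(B z f)^2 = \<alpha> * B z z" and rho: "rho_b Q P f \<alpha> p = projL z"
    using rv unfolding z_def s_def py by auto
  have zz: "B z z > 0" using P_pos[OF zP] .
  have zHS: "projL z \<in> horosphere Q P f \<alpha>" unfolding horosphere_def using zP zr hs_iff[OF zP] by auto
  have ze: "z = (1/t) *\<^sub>R d + s *\<^sub>R f" unfolding z_def t(2) using t by simp
  have "z \<in> D" using stepD[OF ch d _ ze zz hb_strict[OF P_pos[OF dP] rd al] hb_strict[OF zz _ al]] t zr
    by simp
  then show "p \<in> {p \<in> horoball Q P f \<alpha>. rho_b Q P f \<alpha> p \<in> projL ` D \<inter> horosphere Q P f \<alpha>}"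
    using p rho zHS by auto
next
  fix p assume p: "p \<in> {p \<in> horoball Q P f \<alpha>. rho_b Q P f \<alpha> p \<in> projL ` D \<inter> horosphere Q P f \<alpha>}"
  then obtain y where y: "y \<in> P" "(B y f)^2 / B y y \<le> \<alpha>" and py: "p = projL y"
    unfolding horoball_def by auto
  have ry: "(B y f)^2 \<le> \<alpha> * B y y" using y hb_iff by auto
  note rv = rho_val[OF al(1) y(1) ry]
  define s where "s = ((B y f)^2 / \<alpha> - B y y) / (2 * B y f)"
  define z where "z = y + s *\<^sub>R f"
  have zP: "z \<in> P" and zr: "(B z f)^2 = \<alpha> * B z z" and rho: "rho_b Q P f \<alpha> p = projL z"
    using rv unfolding z_def s_def py by auto
  from p rho obtain d where d: "d \<in> D" "projL z = projL d" by auto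
  obtain t where t: "t > 0" "d = t *\<^sub>R z" using proj_eq[of d z] d(2) by auto
  have dP: "d \<in> P" using d chamber_sub[OF ch] by auto
  have rd: "(B d f)^2 \<le> \<alpha> * B d d" unfolding t(2) ratio_scale using zr t by simp
  have yy: "B y y > 0" using P_pos[OF y(1)] .
  have ye: "y = (1/t) *\<^sub>R d + (- s) *\<^sub>R f" unfolding t(2) z_def using t by (simp add: algebra_simps)
  have "y \<in> D" using stepD[OF ch d(1) _ ye yy hb_strict[OF P_pos[OF dP] rd al] hb_strict[OF yy ry al]] t
    by simp
  thus "p \<in> projL ` D \<inter> horoball Q P f \<alpha>" using p py by auto
qed

end


theorem corollary3p12:
  fixes Q :: "int^'n^'n" and h f :: "real^'n"
    and G :: "(real^'n \<Rightarrow> real^'n) set" and V :: "(real^'n) set"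
  assumes L: "even_hyperbolic Q"
    and h: "bil Q h h > 0"
    and G: "finite_index_subgroup G (Oplus Q (posCone Q h))"
    and V: "V \<subseteq> negL Q \<inter> dualL Q"
    and V1: "\<exists>c>0. \<forall>v\<in>V. - bil Q v v < c"
    and V2: "\<forall>g\<in>G. g ` V = V"
    and V3: "\<forall>D. is_chamber Q (posCone Q h) V D \<longrightarrow>
               (\<exists>\<Delta>. finite \<Delta> \<and> defining_set Q (posCone Q h) D \<Delta>)"
    and V4: "\<forall>D. is_chamber Q (posCone Q h) V D \<longrightarrow>
               (\<forall>x\<in>closure D. x \<noteq> 0 \<and> bil Q x x = 0 \<longrightarrow>
                  (\<exists>t>0. \<exists>l\<in>latL. x = t *\<^sub>R l))"
    and f: "f \<in> closure (posCone Q h) \<inter> latL" "f \<noteq> 0" "bil Q f f = 0"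
  shows "\<exists>\<alpha>0>0. \<forall>\<alpha>. 0 < \<alpha> \<and> \<alpha> \<le> \<alpha>0 \<longrightarrow>
     (\<forall>v\<in>V. (projL ` perp Q (posCone Q h) v \<inter> horoball Q (posCone Q h) f \<alpha> \<noteq> {})
              \<longleftrightarrow> bil Q v f = 0) \<and>
     (\<forall>D. is_chamber Q (posCone Q h) V D \<longrightarrow>
        (f \<notin> closure D \<longrightarrow> projL ` D \<inter> horoball Q (posCone Q h) f \<alpha> = {}) \<and>
        (f \<in> closure D \<longrightarrow> projL ` D \<inter> horoball Q (posCone Q h) f \<alpha> =
           {p \<in> horoball Q (posCone Q h) f \<alpha>.
              rho_b Q (posCone Q h) f \<alpha> p \<in> projL ` D \<inter> horosphere Q (posCone Q h) f \<alpha>}))"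
  proof -
  obtain c where c: "c > 0" "\<forall>v\<in>V. - bil Q v v < c" using V1 by blast
  have Ld: "transpose Q = Q" "\<forall>x y. bil Q x x > 0 \<longrightarrow> bil Q x y = 0 \<longrightarrow> y \<noteq> 0 \<longrightarrow> bil Q y y < 0"
    using L unfolding even_hyperbolic_def by auto
  interpret hyp Q h f V c
    by unfold_locales (use Ld h f V c in auto)
  have c2: "1/(2*c) > 0" using c by simp
  show ?thesis
  proof (rule exI[of _ "1/(2*c)"], rule conjI[OF c2], intro allI impI)
    fix \<alpha> assume a: "0 < \<alpha> \<and> \<alpha> \<le> 1/(2*c)"
    have p1: "\<forall>v\<in>V. (projL ` perp Q (posCone Q h) v \<inter> horoball Q (posCone Q h) f \<alpha> \<noteq> {}) \<longleftrightarrow> bil Q v f = 0"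
      using part1 a by blast
    have p2: "\<forall>D. is_chamber Q (posCone Q h) V D \<longrightarrow>
        (f \<notin> closure D \<longrightarrow> projL ` D \<inter> horoball Q (posCone Q h) f \<alpha> = {}) \<and>
        (f \<in> closure D \<longrightarrow> projL ` D \<inter> horoball Q (posCone Q h) f \<alpha> =
           {p \<in> horoball Q (posCone Q h) f \<alpha>.
              rho_b Q (posCone Q h) f \<alpha> p \<in> projL ` D \<inter> horosphere Q (posCone Q h) f \<alpha>})"
      using part2a part2b a by blast
    show "(\<forall>v\<in>V. (projL ` perp Q (posCone Q h) v \<inter> horoball Q (posCone Q h) f \<alpha> \<noteq> {}) \<longleftrightarrow> bil Q v f = 0) \<and>
     (\<forall>D. is_chamber Q (posCone Q h) V D \<longrightarrow>
        (f \<notin> closure D \<longrightarrow> projL ` D \<inter> horoball Q (posCone Q h) f \<alpha> = {}) \<and>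
        (f \<in> closure D \<longrightarrow> projL ` D \<inter> horoball Q (posCone Q h) f \<alpha> =
           {p \<in> horoball Q (posCone Q h) f \<alpha>.
              rho_b Q (posCone Q h) f \<alpha> p \<in> projL ` D \<inter> horosphere Q (posCone Q h) f \<alpha>}))"
      using p1 p2 by (rule conjI)
  qed
qed

end
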